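(* Let $\alpha\in\mathbb{R}^+\setminus\mathbb{Q}$ and let $f\colon[0,1)\to\mathbb{R}$ be non-negative and Riemann integrable. Then for every $y\in[0,1)$ the autocorrelation of $\mu_y=\sum_{z\in\mathbb{Z}}f(T_\alpha^z(y))\,\delta_z$ exists and equals $\sum_{z\in\mathbb{Z}}\Big(\int_0^1 f(T_\alpha^{-z}x)\,f(x)\,dx\Big)\delta_z$; in particular it is independent of $y$.
   Context: $T_\alpha(x)=\{x+\alpha\}$ on $[0,1)$, with $\{t\}$ the fractional part. For a measure $\mu$ on $\mathbb{Z}$, $\widetilde{\mu}(A)=\overline{\mu(-A)}$, $\mu|_n$ is the restriction to $\{|x|\le n\}$, and the autocorrelation $\gamma_\mu$ is the vague limit (pointwise convergence of masses at each $z\in\mathbb{Z}$) of $\frac1{2n+1}\mu|_n*\widetilde{\mu|_n}$. *)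

theory Defs
  imports "HOL-Analysis.Analysis"
begin

text \<open>Rotation T_alpha(x) = frac(x + alpha) on [0,1), and its integer powers.
  For z :: int, T_alpha^z x = frac(x + z*alpha) (for negative z this is the
  inverse map iterated).\<close>
definition T_rot :: "real \<Rightarrow> real \<Rightarrow> real" where
  "T_rot \<alpha> x = frac (x + \<alpha>)"

definition T_pow :: "real \<Rightarrow> int \<Rightarrow> real \<Rightarrow> real" where
  "T_pow \<alpha> z x = frac (x + of_int z * \<alpha>)"

text \<open>Measures on Z are represented by their point masses (int => complex).\<close>
type_synonym zmeasure = "int \<Rightarrow> complex"

definition restr :: "nat \<Rightarrow> zmeasure \<Rightarrow> zmeasure" where
  "restr n \<mu> = (\<lambda>z. if \<bar>z\<bar> \<le> int n then \<mu> z else 0)"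

definition reflect :: "zmeasure \<Rightarrow> zmeasure" where
  "reflect \<mu> = (\<lambda>z. cnj (\<mu> (- z)))"

text \<open>Convolution; used only for finitely supported measures.\<close>
definition zconv :: "zmeasure \<Rightarrow> zmeasure \<Rightarrow> zmeasure" where
  "zconv \<mu> \<nu> = (\<lambda>z. \<Sum>x\<in>{x. \<mu> x \<noteq> 0}. \<mu> x * \<nu> (z - x))"

text \<open>gamma is the autocorrelation of mu: vague limit, i.e. pointwise
  convergence of masses of (2n+1)^(-1) mu|_n * reflect(mu|_n).\<close>
definition is_autocorrelation :: "zmeasure \<Rightarrow> zmeasure \<Rightarrow> bool" where
  "is_autocorrelation \<mu> \<gamma> \<longleftrightarrow>
     (\<forall>z. (\<lambda>n::nat. zconv (restr n \<mu>) (reflect (restr n \<mu>)) z / of_nat (2 * n + 1))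
            \<longlonglongrightarrow> \<gamma> z)"

text \<open>Riemann integrability on [0,1) (Darboux criterion with a partition
  0 = p_0 < ... < p_n = 1 into half-open cells).\<close>
definition riemann_integrable_01 :: "(real \<Rightarrow> real) \<Rightarrow> bool" where
  "riemann_integrable_01 f \<longleftrightarrow> bounded (f ` {0..<1}) \<and>
     (\<forall>\<epsilon>>0. \<exists>(n::nat) (p::nat \<Rightarrow> real). p 0 = 0 \<and> p n = 1 \<and> (\<forall>i<n. p i < p (Suc i)) \<and>
        (\<Sum>i<n. (p (Suc i) - p i) *
            ((SUP x\<in>{p i..<p (Suc i)}. f x) - (INF x\<in>{p i..<p (Suc i)}. f x))) < \<epsilon>)"

end

theory Submission
  imports Defs "HOL-Analysis.Kronecker_Approximation_Theorem" "HOL-Real_Asymp.Real_Asymp"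
begin


definition ind :: "real \<Rightarrow> real \<Rightarrow> real \<Rightarrow> real" where
  "ind a b t = (if a \<le> t \<and> t < b then 1 else 0)"

definition Good :: "real \<Rightarrow> (real \<Rightarrow> real) \<Rightarrow> real \<Rightarrow> bool" where
  "Good \<alpha> h L \<longleftrightarrow> (\<forall>y. (\<lambda>N. (\<Sum>k<N. h (frac (y + real k * \<alpha>))) / real N) \<longlonglongrightarrow> L)"

lemma aux_lin: "(A::real) = a + X \<Longrightarrow> X = Y \<Longrightarrow> A = Z + b \<Longrightarrow> a = c \<Longrightarrow> Y - Z = b - c"
  by linarith

lemma shift_one:
  fixes h :: "real \<Rightarrow> real"
  assumes "\<And>t. 0 \<le> h t" "\<And>t. h t \<le> 1"
  shows "\<bar>(\<Sum>k<N. h (frac (y + \<alpha> + real k * \<alpha>))) - (\<Sum>k<N. h (frac (y + real k * \<alpha>)))\<bar> \<le> 1"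
proof -
  have "(\<Sum>k<N. h (frac (y + \<alpha> + real k * \<alpha>))) = (\<Sum>k<Suc N. h (frac (y + real k * \<alpha>))) - h (frac y)"
    using sum.lessThan_Suc_shift[of "\<lambda>k. h (frac (y + real k * \<alpha>))" N] by (simp add: algebra_simps)
  then have "(\<Sum>k<N. h (frac (y + \<alpha> + real k * \<alpha>))) - (\<Sum>k<N. h (frac (y + real k * \<alpha>)))
     = h (frac (y + real N * \<alpha>)) - h (frac y)" by simp
  then show ?thesis using assms[of "frac (y + real N * \<alpha>)"] assms[of "frac y"] by simp
qed

lemma shift_many:
  fixes h :: "real \<Rightarrow> real"
  assumes "\<And>t. 0 \<le> h t" "\<And>t. h t \<le> 1"
  shows "\<bar>(\<Sum>k<N. h (frac (y + real m * \<alpha> + real k * \<alpha>))) - (\<Sum>k<N. h (frac (y + real k * \<alpha>)))\<bar> \<le> real m"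
proof -
  define S where "S w = (\<Sum>k<N. h (frac (w + real k * \<alpha>)))" for w
  have "\<bar>S (y + real m * \<alpha>) - S y\<bar> \<le> real m"
  proof (induction m)
    case 0 then show ?case by simp
  next
    case (Suc m)
    have "\<bar>S ((y + real m * \<alpha>) + \<alpha>) - S (y + real m * \<alpha>)\<bar> \<le> 1"
      unfolding S_def by (rule shift_one[OF assms])
    moreover have "y + real (Suc m) * \<alpha> = (y + real m * \<alpha>) + \<alpha>" by (simp add: algebra_simps)
    ultimately show ?case using Suc by (smt (verit) of_nat_Suc)
  qed
  then show ?thesis unfolding S_def .
qed

lemma frac_frac_add: "frac (frac a + b) = frac (a + b)"
proof -
  have "frac a + b = (a + b) + of_int (- \<lfloor>a\<rfloor>)" by (simp add: frac_def)
  then show ?thesis by (metis frac_add_of_int_right)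
qed

lemma ind_nonneg: "0 \<le> ind a b t" and ind_le1: "ind a b t \<le> 1"
  by (auto simp: ind_def)

lemma frac_shift_eq:
  assumes "a - b \<in> \<int>"
  shows "frac (x - a) = frac (x - b)"
proof -
  have "x - b = (x - a) + (a - b)" by simp
  then show ?thesis using frac_add_int_right[OF assms, of "x - a"] by simp
qed

lemma P1:
  assumes "0 < \<delta>"
  shows "ind (real i * \<delta>) (real (Suc i) * \<delta>) (frac x) \<le> ind 0 \<delta> (frac (x - real i * \<delta>))"
proof (cases "real i * \<delta> \<le> frac x \<and> frac x < real (Suc i) * \<delta>")
  case True
  have "0 \<le> real i * \<delta>" using assms by simp
  have "frac x - real i * \<delta> \<ge> 0" "frac x - real i * \<delta> < 1" using True frac_lt_1[of x] \<open>0 \<le> real i * \<delta>\<close> by linarith+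
  then have "frac x - real i * \<delta> \<in> {0..<1}" by simp
  then have "frac (frac x - real i * \<delta>) = frac x - real i * \<delta>" by simp
  moreover have "frac (x - real i * \<delta>) = frac (frac x - real i * \<delta>)"
    using frac_frac_add[of x "- (real i * \<delta>)"] by simp
  ultimately have "frac (x - real i * \<delta>) = frac x - real i * \<delta>" by simp
  then show ?thesis using True by (auto simp: ind_def algebra_simps)
qed (auto simp: ind_def)

lemma P2:
  assumes "0 < \<delta>" "real (Suc i) * \<delta> \<le> 1"
  shows "ind (real i * \<delta>) (real (Suc i) * \<delta>) (frac x) = ind 0 \<delta> (frac (x - real i * \<delta>))"
proof (cases "0 \<le> frac (x - real i * \<delta>) \<and> frac (x - real i * \<delta>) < \<delta>")
  case True
  let ?u = "frac (x - real i * \<delta>)"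
  have "?u + real i * \<delta> \<in> {0..<1}" using True assms by (auto simp: algebra_simps)
  then have "frac (?u + real i * \<delta>) = ?u + real i * \<delta>" by (rule frac_eq_id)
  moreover have "frac (?u + real i * \<delta>) = frac x"
    using frac_frac_add[of "x - real i * \<delta>" "real i * \<delta>"] by (simp only: diff_add_cancel)
  ultimately show ?thesis using True by (auto simp: ind_def algebra_simps)
next
  case False
  then show ?thesis using P1[OF assms(1), of i x] by (auto simp: ind_def split: if_splits)
qed



lemma ind_step: "0 \<le> x \<Longrightarrow> 0 < \<delta> \<Longrightarrow> ind 0 (x + \<delta>) t = ind 0 x t + ind x (x + \<delta>) t"
  by (auto simp: ind_def)

lemma ind_split: "0 < \<delta> \<Longrightarrow> ind 0 (real m * \<delta>) t = (\<Sum>i<m. ind (real i * \<delta>) (real (Suc i) * \<delta>) t)"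
proof (induction m)
  case 0 then show ?case by (simp add: ind_def)
next
  case (Suc m)
  have h0: "0 \<le> real m * \<delta>" using Suc.prems by simp
  have E: "real (Suc m) * \<delta> = real m * \<delta> + \<delta>" by (simp add: algebra_simps)
  have "ind 0 (real (Suc m) * \<delta>) t = ind 0 (real m * \<delta>) t + ind (real m * \<delta>) (real (Suc m) * \<delta>) t"
    unfolding E by (rule ind_step[OF h0 Suc.prems])
  then show ?case using Suc by simp
qed

lemma ind_mono: "b \<le> b' \<Longrightarrow> ind a b t \<le> ind a b' t"
  by (auto simp: ind_def)

lemma cell_shift:
  assumes "\<delta> = frac (real q * \<alpha>)"
  shows "frac (y + real k * \<alpha> - real i * \<delta>) = frac ((y - real (i * q) * \<alpha>) + real k * \<alpha>)"
proof -
  have "real i * \<delta> = real i * (real q * \<alpha>) - real i * of_int \<lfloor>real q * \<alpha>\<rfloor>"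
    using assms by (simp add: frac_def right_diff_distrib)
  then have "real i * \<delta> - real (i * q) * \<alpha> = of_int (- (int i * \<lfloor>real q * \<alpha>\<rfloor>))"
    by simp
  then have "real i * \<delta> - real (i * q) * \<alpha> \<in> \<int>" by (metis Ints_of_int)
  then have "frac (y + real k * \<alpha> - real i * \<delta>) = frac (y + real k * \<alpha> - real (i * q) * \<alpha>)"
    by (rule frac_shift_eq)
  then show ?thesis by (simp add: algebra_simps)
qed

lemma count_bounds:
  fixes \<alpha> \<delta> b y :: real and q m K N :: nat
  defines "F \<equiv> \<lambda>w. (\<Sum>k<N. ind 0 \<delta> (frac (w + real k * \<alpha>)))"
  assumes d: "0 < \<delta>" "\<delta> = frac (real q * \<alpha>)"
    and mb: "real m * \<delta> \<le> b" "b \<le> real (Suc m) * \<delta>" "real m * \<delta> \<le> 1" "m \<le> K"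
  shows "real m * (F y - real (K*q)) \<le> (\<Sum>k<N. ind 0 b (frac (y + real k * \<alpha>)))"
    and "(\<Sum>k<N. ind 0 b (frac (y + real k * \<alpha>))) \<le> real (Suc m) * (F y + real (K*q))"
proof -
  define c where "c i = (\<Sum>k<N. ind (real i * \<delta>) (real (Suc i) * \<delta>) (frac (y + real k * \<alpha>)))" for i
  have Fsh: "\<bar>F (y - real (i * q) * \<alpha>) - F y\<bar> \<le> real (i * q)" for i
  proof -
    have "\<bar>F ((y - real (i * q) * \<alpha>) + real (i*q) * \<alpha>) - F (y - real (i * q) * \<alpha>)\<bar> \<le> real (i * q)"
      unfolding F_def by (rule shift_many[OF ind_nonneg ind_le1])
    then show ?thesis by simp
  qed
  have cup: "c i \<le> F (y - real (i * q) * \<alpha>)" for i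
    unfolding c_def F_def
    by (rule sum_mono) (metis P1[OF d(1)] cell_shift[OF d(2)])
  have clo: "c i = F (y - real (i * q) * \<alpha>)" if "real (Suc i) * \<delta> \<le> 1" for i
    unfolding c_def F_def
    by (rule sum.cong) (simp_all only: P2[OF d(1) that] cell_shift[OF d(2)])
  have iq: "real (i * q) \<le> real (K * q)" if "i \<le> K" for i
    by (simp only: of_nat_le_iff) (rule mult_le_mono1[OF that])
  have "(\<Sum>k<N. ind 0 (real m * \<delta>) (frac (y + real k * \<alpha>))) = (\<Sum>i<m. c i)"
    unfolding c_def ind_split[OF d(1)] by (rule sum.swap)
  also have "\<dots> \<ge> (\<Sum>i<m. (F y - real (K*q)))"
  proof (rule sum_mono)
    fix i assume "i \<in> {..<m}"
    then have si: "Suc i \<le> m" by simp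
    then have "real (Suc i) * \<delta> \<le> real m * \<delta>" using d(1) by (intro mult_right_mono) auto
    then have "real (Suc i) * \<delta> \<le> 1" using mb(3) by linarith
    moreover have "i \<le> K" using si mb(4) by simp
    moreover have "F y - real (i*q) \<le> F (y - real (i * q) * \<alpha>)" using Fsh[of i] by (simp add: abs_le_iff)
    ultimately show "F y - real (K*q) \<le> c i" using clo iq[of i] by fastforce
  qed
  finally have "real m * (F y - real (K*q)) \<le> (\<Sum>k<N. ind 0 (real m * \<delta>) (frac (y + real k * \<alpha>)))"
    by simp
  also have "\<dots> \<le> (\<Sum>k<N. ind 0 b (frac (y + real k * \<alpha>)))"
    by (rule sum_mono) (rule ind_mono[OF mb(1)])
  finally show "real m * (F y - real (K*q)) \<le> (\<Sum>k<N. ind 0 b (frac (y + real k * \<alpha>)))" .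
  have "(\<Sum>k<N. ind 0 b (frac (y + real k * \<alpha>))) \<le> (\<Sum>k<N. ind 0 (real (Suc m) * \<delta>) (frac (y + real k * \<alpha>)))"
    by (rule sum_mono) (rule ind_mono[OF mb(2)])
  also have "\<dots> = (\<Sum>i<Suc m. c i)"
    unfolding c_def ind_split[OF d(1)] by (rule sum.swap)
  also have "\<dots> \<le> (\<Sum>i<Suc m. (F y + real (K*q)))"
  proof (rule sum_mono)
    fix i assume "i \<in> {..<Suc m}"
    then have "i \<le> K" using mb by simp
    moreover have "F (y - real (i * q) * \<alpha>) \<le> F y + real (i*q)" using Fsh[of i] by (simp add: abs_le_iff)
    ultimately show "c i \<le> F y + real (K*q)" using cup[of i] iq[of i] by fastforce
  qed
  finally show "(\<Sum>k<N. ind 0 b (frac (y + real k * \<alpha>))) \<le> real (Suc m) * (F y + real (K*q))"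
    by simp
qed



lemma arith_upper:
  fixes K m \<delta> b F D c N :: real
  assumes "0 < \<delta>" "\<delta> \<le> 1/2" "1 - \<delta> \<le> K * \<delta>" "(m+1) * \<delta> \<le> b + \<delta>" "0 < K" "0 \<le> m" "b \<le> 1" "0 \<le> b"
    "c \<le> (m+1) * (F + D)" "K * (F - D) \<le> N" "0 \<le> D" "m \<le> K" "0 \<le> N"
  shows "c \<le> (b + 4*\<delta>) * N + 2 * (K+1) * D"
proof -
  have "K * c \<le> (m+1) * (K * F + K * D)"
    using mult_left_mono[OF assms(9), of K] assms(5) by (simp add: algebra_simps)
  also have "\<dots> \<le> (m+1) * (N + 2 * K * D)"
    using assms(10,6) by (intro mult_left_mono) (auto simp: algebra_simps)
  finally have 1: "K * c \<le> (m+1) * N + 2 * K * (m+1) * D" by (simp add: algebra_simps)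
  have "0 \<le> \<delta> * (3 - b - 4*\<delta>)" using assms by (intro mult_nonneg_nonneg) auto
  then have "b + \<delta> \<le> (b + 4*\<delta>) * (1 - \<delta>)" by (simp add: algebra_simps)
  also have "\<dots> \<le> (b + 4*\<delta>) * (K * \<delta>)"
    using assms by (intro mult_left_mono) auto
  finally have "(m+1) * \<delta> \<le> ((b + 4*\<delta>) * K) * \<delta>" using assms(4) by (simp add: algebra_simps)
  then have 2: "m + 1 \<le> (b + 4*\<delta>) * K" using assms(1) by simp
  have "(m+1) * N \<le> (b + 4*\<delta>) * K * N" using 2 assms(13) by (intro mult_right_mono) auto
  moreover have "2 * K * (m+1) * D \<le> 2 * K * (K+1) * D"
    using assms by (intro mult_right_mono mult_left_mono) auto
  ultimately have "K * c \<le> K * ((b + 4*\<delta>) * N + 2 * (K+1) * D)" using 1 by (simp add: algebra_simps)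
  then show ?thesis using assms(5) by simp
qed

lemma arith_lower:
  fixes K m \<delta> b F D c N :: real
  assumes "0 < \<delta>" "(K+1) * \<delta> \<le> 1 + \<delta>" "b \<le> (m+1) * \<delta>" "0 < K" "0 \<le> m" "b \<le> 1"
    "m * (F - D) \<le> c" "N \<le> (K+1) * (F + D)" "0 \<le> D" "m \<le> K" "0 \<le> N"
  shows "(b - 2*\<delta>) * N - 2 * (K+1) * D \<le> c"
proof -
  have "m * (N - 2 * (K+1) * D) \<le> m * ((K+1) * (F - D))"
    using assms by (intro mult_left_mono) (auto simp: algebra_simps)
  also have "\<dots> \<le> (K+1) * c"
    using mult_left_mono[OF assms(7), of "K+1"] assms(4) by (simp add: algebra_simps)
  finally have 1: "m * N - 2 * m * (K+1) * D \<le> (K+1) * c" by (simp add: algebra_simps)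
  have 2: "(b - 2*\<delta>) * (K+1) \<le> m"
  proof (cases "b - 2*\<delta> \<le> 0")
    case True
    have "(b - 2*\<delta>) * (K+1) \<le> 0" using True assms(4) by (intro mult_nonpos_nonneg) auto
    then show ?thesis using assms(5) by linarith
  next
    case False
    have "\<delta> * (b - 1 - 2*\<delta>) \<le> 0" using assms by (intro mult_nonneg_nonpos) auto
    moreover have "(b - 2*\<delta>) * (1 + \<delta>) = b - \<delta> + \<delta> * (b - 1 - 2*\<delta>)" by (simp add: algebra_simps)
    ultimately have h: "(b - 2*\<delta>) * (1 + \<delta>) \<le> b - \<delta>" by linarith
    have "(b - 2*\<delta>) * ((K+1) * \<delta>) \<le> (b - 2*\<delta>) * (1 + \<delta>)"
      using False assms(2) by (intro mult_left_mono) auto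
    then have "(b - 2*\<delta>) * ((K+1) * \<delta>) \<le> b - \<delta>" using h by linarith
    also have "\<dots> \<le> m * \<delta>" using assms(3) by (simp add: algebra_simps)
    finally have "((b - 2*\<delta>) * (K+1)) * \<delta> \<le> m * \<delta>" by (simp add: algebra_simps)
    then show ?thesis using assms(1) by simp
  qed
  have "(b - 2*\<delta>) * (K+1) * N \<le> m * N" using 2 assms(11) by (intro mult_right_mono) auto
  moreover have "2 * m * (K+1) * D \<le> 2 * (K+1) * (K+1) * D"
    using assms by (intro mult_right_mono mult_left_mono) auto
  ultimately have "(K+1) * ((b - 2*\<delta>) * N - 2 * (K+1) * D) \<le> (K+1) * c" using 1 by (simp add: algebra_simps)
  moreover have "0 < K + 1" using assms(4) by simp
  ultimately show ?thesis using mult_le_cancel_left_pos[of "K+1"] by blast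
qed

lemma ind01_frac: "ind 0 1 (frac x) = 1"
  using frac_lt_1[of x] by (simp add: ind_def)

lemma equi_0b:
  assumes irr: "\<alpha> \<notin> \<rat>" and b: "0 \<le> b" "b \<le> 1"
  shows "(\<lambda>N. (\<Sum>k<N. ind 0 b (frac (y + real k * \<alpha>))) / real N) \<longlonglongrightarrow> b"
proof (rule LIMSEQ_I)
  fix \<epsilon> :: real assume "0 < \<epsilon>"
  define \<eta> where "\<eta> = min (1/2) (\<epsilon>/8)"
  have "\<eta> > 0" using \<open>0 < \<epsilon>\<close> by (simp add: \<eta>_def)
  have e1: "0 \<le> \<eta>/2" "\<eta>/2 \<le> 1" "\<eta>/2 > 0" using \<open>\<eta> > 0\<close> by (auto simp: \<eta>_def)
  obtain q :: nat where "q > 0" and q: "\<bar>frac (real q * \<alpha>) - \<eta>/2\<bar> < \<eta>/2"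
    using Kronecker_approx_1_explicit[OF irr e1] by blast
  define \<delta> where "\<delta> = frac (real q * \<alpha>)"
  have "\<delta> - \<eta>/2 < \<eta>/2 \<and> - (\<eta>/2) < \<delta> - \<eta>/2" using q unfolding \<delta>_def abs_less_iff by linarith
  then have d0: "0 < \<delta>" and d1: "\<delta> < \<eta>" by linarith+
  have d2: "\<delta> \<le> 1/2" "\<delta> < \<epsilon>/8" using d1 by (auto simp: \<eta>_def)
  define K where "K = nat \<lfloor>1/\<delta>\<rfloor>"
  have "1/\<delta> \<ge> 2" using d0 d2 by (simp add: field_simps)
  then have "0 \<le> \<lfloor>1/\<delta>\<rfloor>" using d0 by simp
  then have Kf: "real K = of_int \<lfloor>1/\<delta>\<rfloor>" unfolding K_def by simp
  have K1: "real K \<le> 1/\<delta>" "1/\<delta> < real K + 1" using Kf by linarith+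
  have Kd: "real K * \<delta> \<le> 1" "1 < (real K + 1) * \<delta>" using K1 d0 by (simp_all add: field_simps)
  have Kpos: "real K > 0" using K1 \<open>1/\<delta> \<ge> 2\<close> by linarith
  define m where "m = nat \<lfloor>b/\<delta>\<rfloor>"
  have mf: "real m = of_int \<lfloor>b/\<delta>\<rfloor>" unfolding m_def using b d0 by simp
  have m1: "real m \<le> b/\<delta>" "b/\<delta> < real m + 1" using mf by linarith+
  have md: "real m * \<delta> \<le> b" "b < (real m + 1) * \<delta>" using m1 d0 by (simp_all add: field_simps)
  have "b/\<delta> \<le> 1/\<delta>" using b d0 by (simp add: divide_right_mono)
  then have "m \<le> K" unfolding m_def K_def by (simp add: floor_mono nat_mono)
  define D where "D = real (K * q)"
  have D0: "0 \<le> D" by (simp add: D_def)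
  define F where "F N = (\<Sum>k<N. ind 0 \<delta> (frac (y + real k * \<alpha>)))" for N
  obtain N0 :: nat where N0: "real N0 > 4 * (real K + 1) * D / \<epsilon>"
    using reals_Archimedean2 by blast
  show "\<exists>no. \<forall>n\<ge>no. norm ((\<Sum>k<n. ind 0 b (frac (y + real k * \<alpha>))) / real n - b) < \<epsilon>"
  proof (intro exI allI impI)
    fix N assume "N \<ge> Suc N0"
    then have Npos: "real N > 0" and NN0: "real N > 4 * (real K + 1) * D / \<epsilon>" using N0 by auto
    have err: "2 * (real K + 1) * D < \<epsilon>/2 * real N"
      using NN0 \<open>0 < \<epsilon>\<close> by (simp add: field_simps)
    let ?c = "\<Sum>k<N. ind 0 b (frac (y + real k * \<alpha>))"
    have cN: "(\<Sum>k<N. ind 0 1 (frac (y + real k * \<alpha>))) = real N" by (simp add: ind01_frac)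
    have hm1: "real m * \<delta> \<le> 1" using md b by linarith
    have hb: "b \<le> real (Suc m) * \<delta>" using md by (simp add: algebra_simps)
    note cb1 = count_bounds[where N=N and y=y and q=q and m=m and K=K and b=b and \<delta>=\<delta> and \<alpha>=\<alpha>,
       OF d0 \<delta>_def md(1) hb hm1 \<open>m \<le> K\<close>, folded F_def D_def]
    have hK: "1 \<le> real (Suc K) * \<delta>" using Kd by (simp add: algebra_simps)
    note cK = count_bounds[where N=N and y=y and q=q and m=K and K=K and b=1 and \<delta>=\<delta> and \<alpha>=\<alpha>,
       OF d0 \<delta>_def Kd(1) hK Kd(1) order_refl, folded F_def D_def, unfolded cN]
    have s1: "real (Suc m) = real m + 1" "real (Suc K) = real K + 1" by simp_all
    have u3: "1 - \<delta> \<le> real K * \<delta>" using Kd(2) by (simp add: algebra_simps)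
    have u4: "(real m + 1) * \<delta> \<le> b + \<delta>" using md(1) by (simp add: algebra_simps)
    have l2: "(real K + 1) * \<delta> \<le> 1 + \<delta>" using Kd(1) by (simp add: algebra_simps)
    have l3: "b \<le> (real m + 1) * \<delta>" using md(2) by linarith
    have mK: "real m \<le> real K" using \<open>m \<le> K\<close> by simp
    have up: "?c \<le> (b + 4*\<delta>) * real N + 2 * (real K+1) * D"
      by (rule arith_upper[OF d0 d2(1) u3 u4 Kpos _ b(2) b(1) cb1(2)[unfolded s1] cK(1) D0 mK]) (simp_all add: Npos less_imp_le)
    have lo: "(b - 2*\<delta>) * real N - 2 * (real K+1) * D \<le> ?c"
      by (rule arith_lower[OF d0 l2 l3 Kpos _ b(2) cb1(1) cK(2)[unfolded s1] D0 mK]) (simp_all add: Npos less_imp_le)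
    have dN: "4 * \<delta> * real N < \<epsilon>/2 * real N" using d2 Npos by (intro mult_strict_right_mono) auto
    have e1: "(b + 4*\<delta>) * real N = b * real N + 4 * \<delta> * real N" "(b + \<epsilon>) * real N = b * real N + \<epsilon>/2 * real N + \<epsilon>/2 * real N"
      "(b - 2*\<delta>) * real N = b * real N - 4 * \<delta> * real N / 2" "(b - \<epsilon>) * real N = b * real N - \<epsilon>/2 * real N - \<epsilon>/2 * real N"
      by (simp_all add: algebra_simps)
    have "0 < \<epsilon>/2 * real N" using \<open>0 < \<epsilon>\<close> Npos by simp
    have "?c < (b + \<epsilon>) * real N" using up err dN unfolding e1 by linarith
    moreover have "?c > (b - \<epsilon>) * real N" using lo err dN unfolding e1 using \<open>0 < \<epsilon>/2 * real N\<close> by linarith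
    ultimately have "\<bar>?c / real N - b\<bar> < \<epsilon>" using Npos
      by (simp add: abs_less_iff field_simps)
    then show "norm (?c / real N - b) < \<epsilon>" by simp
  qed
qed



lemma good_ind:
  assumes "\<alpha> \<notin> \<rat>" "0 \<le> a" "a \<le> b" "b \<le> 1"
  shows "Good \<alpha> (ind a b) (b - a)"
  unfolding Good_def
proof
  fix y
  have e: "ind a b (frac x) = ind 0 b (frac x) - ind 0 a (frac x)" for x
    using assms frac_ge_0[of x] by (auto simp: ind_def)
  have "(\<lambda>N. (\<Sum>k<N. ind 0 b (frac (y + real k * \<alpha>))) / real N - (\<Sum>k<N. ind 0 a (frac (y + real k * \<alpha>))) / real N) \<longlonglongrightarrow> b - a"
    by (intro tendsto_diff equi_0b) (use assms in auto)
  then show "(\<lambda>N. (\<Sum>k<N. ind a b (frac (y + real k * \<alpha>))) / real N) \<longlonglongrightarrow> b - a"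
    by (simp add: e sum_subtractf diff_divide_distrib)
qed

lemma good_add: "Good \<alpha> f L1 \<Longrightarrow> Good \<alpha> g L2 \<Longrightarrow> Good \<alpha> (\<lambda>t. f t + g t) (L1 + L2)"
  unfolding Good_def by (auto simp: sum.distrib add_divide_distrib intro: tendsto_add)

lemma good_cmul: "Good \<alpha> f L \<Longrightarrow> Good \<alpha> (\<lambda>t. c * f t) (c * L)"
  unfolding Good_def
proof
  fix y assume "\<forall>y. (\<lambda>N. (\<Sum>k<N. f (frac (y + real k * \<alpha>))) / real N) \<longlonglongrightarrow> L"
  then have "(\<lambda>N. c * ((\<Sum>k<N. f (frac (y + real k * \<alpha>))) / real N)) \<longlonglongrightarrow> c * L"
    by (intro tendsto_mult_left) auto
  then show "(\<lambda>N. (\<Sum>k<N. c * f (frac (y + real k * \<alpha>))) / real N) \<longlonglongrightarrow> c * L"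
    by (simp add: sum_distrib_left[symmetric])
qed

lemma good_cong: "Good \<alpha> f L \<Longrightarrow> (\<forall>t\<in>{0..<1}. f t = g t) \<Longrightarrow> Good \<alpha> g L"
proof -
  assume a: "Good \<alpha> f L" "\<forall>t\<in>{0..<1}. f t = g t"
  have "f (frac x) = g (frac x)" for x using a(2) frac_lt_1[of x] by auto
  then show ?thesis using a(1) unfolding Good_def by simp
qed

lemma good_rot: "Good \<alpha> f L \<Longrightarrow> Good \<alpha> (\<lambda>t. f (frac (t + \<beta>))) L"
proof -
  assume a: "Good \<alpha> f L"
  have "frac (frac (y + real k * \<alpha>) + \<beta>) = frac ((y + \<beta>) + real k * \<alpha>)" for y k
    using frac_frac_add[of "y + real k * \<alpha>" \<beta>] by (simp add: algebra_simps)
  then show ?thesis using a unfolding Good_def by simp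
qed

lemma good_mono:
  assumes "Good \<alpha> f L1" "Good \<alpha> g L2" "\<forall>t\<in>{0..<1}. f t \<le> g t"
  shows "L1 \<le> L2"
proof -
  have le: "f (frac x) \<le> g (frac x)" for x using assms(3) frac_lt_1[of x] by auto
  have A: "(\<lambda>N. (\<Sum>k<N. f (frac (0 + real k * \<alpha>))) / real N) \<longlonglongrightarrow> L1"
    using assms(1) unfolding Good_def by blast
  have B: "(\<lambda>N. (\<Sum>k<N. g (frac (0 + real k * \<alpha>))) / real N) \<longlonglongrightarrow> L2"
    using assms(2) unfolding Good_def by blast
  show ?thesis
    by (rule LIMSEQ_le[OF A B]) (auto intro!: divide_right_mono sum_mono le)
qed

lemma good_unique: "Good \<alpha> f L1 \<Longrightarrow> Good \<alpha> f L2 \<Longrightarrow> L1 = L2"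
  unfolding Good_def using LIMSEQ_unique by blast

lemma ind_integral:
  assumes "0 \<le> a" "a \<le> b" "b \<le> 1"
  shows "(ind a b has_integral (b - a)) {0..<1}"
proof -
  have "((\<lambda>x. 1::real) has_integral (b - a)) {a..b}"
    using has_integral_const_real[of "1::real" a b] assms by simp
  moreover have n1: "negligible {x \<in> {a..b} - {a..<b}. (1::real) \<noteq> 0}"
    by (rule negligible_subset[of "{b}"]) auto
  moreover have n2: "negligible {x \<in> {a..<b} - {a..b}. (1::real) \<noteq> 0}"
  proof -
    have e: "{x \<in> {a..<b} - {a..b}. (1::real) \<noteq> 0} = {}" by auto
    show ?thesis unfolding e by (rule negligible_empty)
  qed
  ultimately have "((\<lambda>x. 1::real) has_integral (b - a)) {a..<b}"
    using has_integral_spike_set_eq[OF n2 n1] by blast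
  then have "((\<lambda>x. if x \<in> {a..<b} then 1 else 0) has_integral (b - a)) {0..<1}"
    using has_integral_restrict[where S="{a..<b}" and T="{0..<1}" and f="\<lambda>x. 1::real"] assms by auto
  moreover have "(\<lambda>x. if x \<in> {a..<b} then 1 else 0) = ind a b"
    by (auto simp: ind_def fun_eq_iff)
  ultimately show ?thesis by simp
qed

inductive St :: "(real \<Rightarrow> real) \<Rightarrow> bool" where
  St_ind: "0 \<le> a \<Longrightarrow> a \<le> b \<Longrightarrow> b \<le> 1 \<Longrightarrow> St (ind a b)"
| St_add: "St f \<Longrightarrow> St g \<Longrightarrow> St (\<lambda>t. f t + g t)"
| St_cmul: "St f \<Longrightarrow> St (\<lambda>t. c * f t)"
| St_cong: "St f \<Longrightarrow> \<forall>t\<in>{0..<1}. f t = g t \<Longrightarrow> St g"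

lemma St_ind_gen: "0 \<le> a \<Longrightarrow> b \<le> 1 \<Longrightarrow> St (ind a b)"
proof (cases "a \<le> b")
  case True
  assume "0 \<le> a" "b \<le> 1" then show ?thesis using True by (rule_tac St_ind) auto
next
  case False
  have "St (ind 0 0)" by (rule St_ind) auto
  then show ?thesis by (rule St_cong) (use False in \<open>auto simp: ind_def\<close>)
qed

lemma St_zero: "St (\<lambda>t. 0)"
proof -
  have "St (\<lambda>t. 0 * ind 0 0 t)" by (intro St_cmul St_ind) auto
  then show ?thesis by simp
qed

lemma St_sum: fixes n :: nat shows "(\<And>i. i < n \<Longrightarrow> St (f i)) \<Longrightarrow> St (\<lambda>t. \<Sum>i<n. f i t)"
proof (induction n)
  case 0 then show ?case using St_zero by simp
next
  case (Suc n)
  have "St (\<lambda>t. (\<Sum>i<n. f i t) + f n t)" using Suc by (intro St_add) auto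
  then show ?case by simp
qed

lemma St_diff: "St f \<Longrightarrow> St g \<Longrightarrow> St (\<lambda>t. f t - g t)"
proof -
  assume "St f" "St g"
  then have "St (\<lambda>t. f t + (-1) * g t)" by (intro St_add St_cmul)
  then show ?thesis by simp
qed

lemma ind_mult: "ind a b t * ind c d t = ind (max a c) (max (max a c) (min b d)) t"
  unfolding ind_def by (simp add: max_def min_def)

lemma St_mult_ind: "St g \<Longrightarrow> 0 \<le> a \<Longrightarrow> a \<le> b \<Longrightarrow> b \<le> 1 \<Longrightarrow> St (\<lambda>t. ind a b t * g t)"
proof (induction g rule: St.induct)
  case (St_ind c d)
  show ?case unfolding ind_mult using St_ind by (intro St.St_ind) auto
next
  case (St_add f g)
  then have "St (\<lambda>t. ind a b t * f t + ind a b t * g t)" by (intro St.St_add) auto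
  then show ?case by (simp add: algebra_simps)
next
  case (St_cmul f c)
  then have "St (\<lambda>t. c * (ind a b t * f t))" by (intro St.St_cmul) auto
  then show ?case by (simp add: algebra_simps)
next
  case (St_cong f g)
  have "St (\<lambda>t. ind a b t * f t)" using St_cong by auto
  moreover have "\<forall>t\<in>{0..<1}. ind a b t * f t = ind a b t * g t" using St_cong by auto
  ultimately show ?case by (rule St.St_cong)
qed

lemma St_mult: "St f \<Longrightarrow> St g \<Longrightarrow> St (\<lambda>t. f t * g t)"
proof (induction f rule: St.induct)
  case (St_ind a b)
  then show ?case by (intro St_mult_ind) auto
next
  case (St_add f1 f2)
  then have "St (\<lambda>t. f1 t * g t + f2 t * g t)" by (intro St.St_add) auto
  then show ?case by (simp add: algebra_simps)
next
  case (St_cmul f c)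
  then have "St (\<lambda>t. c * (f t * g t))" by (intro St.St_cmul) auto
  then show ?case by (simp add: algebra_simps)
next
  case (St_cong f1 f2)
  have "St (\<lambda>t. f1 t * g t)" using St_cong by auto
  moreover have "\<forall>t\<in>{0..<1}. f1 t * g t = f2 t * g t" using St_cong by auto
  ultimately show ?case by (rule St.St_cong)
qed

lemma frac_rot_cases:
  assumes "t \<in> {0..<1}"
  shows "frac (t + \<beta>) = (if t + frac \<beta> < 1 then t + frac \<beta> else t + frac \<beta> - 1)"
proof -
  have s: "0 \<le> frac \<beta>" "frac \<beta> < 1" by (simp_all add: frac_lt_1)
  have i1: "t + \<beta> - (t + frac \<beta>) = of_int \<lfloor>\<beta>\<rfloor>" by (simp add: frac_def)
  have i2: "t + \<beta> - (t + frac \<beta> - 1) = of_int (\<lfloor>\<beta>\<rfloor> + 1)" by (simp add: frac_def)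
  show ?thesis
  proof (cases "t + frac \<beta> < 1")
    case True
    have "frac (t + \<beta>) = t + frac \<beta>"
      unfolding frac_unique_iff using True assms s i1 by (auto simp del: of_int_add)
    then show ?thesis using True by simp
  next
    case False
    have "frac (t + \<beta>) = t + frac \<beta> - 1"
    proof (unfold frac_unique_iff, intro conjI)
      show "t + \<beta> - (t + frac \<beta> - 1) \<in> \<int>" unfolding i2 by (rule Ints_of_int)
      show "0 \<le> t + frac \<beta> - 1" using False by linarith
      show "t + frac \<beta> - 1 < 1" using assms s by simp
    qed
    then show ?thesis using False by simp
  qed
qed

lemma rot_ind_eq:
  assumes "0 \<le> a" "a \<le> b" "b \<le> 1" "0 \<le> s" "s < 1" "0 \<le> t" "t < 1"
  shows "ind (max 0 (a - s)) (b - s) t + ind (a + 1 - s) (min 1 (b + 1 - s)) t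
       = ind a b (if t + s < 1 then t + s else t + s - 1)"
proof (cases "t + s < 1")
  case True
  have c1: "(max 0 (a - s) \<le> t \<and> t < b - s) \<longleftrightarrow> (a \<le> t + s \<and> t + s < b)"
    using assms by (simp add: max_def) linarith
  have c2: "\<not> (a + 1 - s \<le> t \<and> t < min 1 (b + 1 - s))" using True assms by linarith
  show ?thesis using True c1 c2 unfolding ind_def by simp
next
  case False
  have c1: "\<not> (max 0 (a - s) \<le> t \<and> t < b - s)" using False assms by linarith
  have c2: "(a + 1 - s \<le> t \<and> t < min 1 (b + 1 - s)) \<longleftrightarrow> (a \<le> t + s - 1 \<and> t + s - 1 < b)"
    using assms by (simp add: min_def) linarith
  show ?thesis using False c1 c2 unfolding ind_def by simp
qed

lemma St_rot: "St f \<Longrightarrow> St (\<lambda>t. f (frac (t + \<beta>)))"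
proof (induction f rule: St.induct)
  case (St_ind a b)
  define s where "s = frac \<beta>"
  have s: "0 \<le> s" "s < 1" by (simp_all add: s_def frac_lt_1)
  have "St (\<lambda>t. ind (max 0 (a - s)) (b - s) t + ind (a + 1 - s) (min 1 (b + 1 - s)) t)"
    using St_ind s by (intro St.St_add St_ind_gen) auto
  moreover have "\<forall>t\<in>{0..<1}. ind (max 0 (a - s)) (b - s) t + ind (a + 1 - s) (min 1 (b + 1 - s)) t = ind a b (frac (t + \<beta>))"
  proof
    fix t :: real assume t: "t \<in> {0..<1}"
    have fr: "frac (t + \<beta>) = (if t + s < 1 then t + s else t + s - 1)" using frac_rot_cases[OF t] unfolding s_def .
    show "ind (max 0 (a - s)) (b - s) t + ind (a + 1 - s) (min 1 (b + 1 - s)) t = ind a b (frac (t + \<beta>))"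
      unfolding fr using t s St_ind by (intro rot_ind_eq) auto
  qed
  ultimately show ?case by (rule St_cong)
next
  case (St_add f g) then show ?case by (intro St.St_add)
next
  case (St_cmul f c) then show ?case by (intro St.St_cmul)
next
  case (St_cong f g)
  have "\<forall>t\<in>{0..<1}. f (frac (t + \<beta>)) = g (frac (t + \<beta>))"
    by (intro ballI) (simp add: St_cong(2) frac_lt_1)
  with St_cong(3) show ?case by (rule St.St_cong)
qed

lemma St_good:
  assumes "\<alpha> \<notin> \<rat>"
  shows "St f \<Longrightarrow> \<exists>L. Good \<alpha> f L \<and> (f has_integral L) {0..<1}"
proof (induction f rule: St.induct)
  case (St_ind a b)
  then show ?case using good_ind[OF assms] ind_integral by blast
next
  case (St_add f g)
  then show ?case using good_add has_integral_add by blast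
next
  case (St_cmul f c)
  then show ?case using good_cmul has_integral_mult_right by blast
next
  case (St_cong f g)
  then obtain L where "Good \<alpha> f L" "(f has_integral L) {0..<1}" by blast
  then show ?case using St_cong(2) good_cong has_integral_eq[of "{0..<1}" f g L] by metis
qed



lemma good_sum:
  fixes n :: nat
  shows "(\<And>i. i < n \<Longrightarrow> Good \<alpha> (f i) (L i)) \<Longrightarrow> Good \<alpha> (\<lambda>t. \<Sum>i<n. f i t) (\<Sum>i<n. L i)"
proof (induction n)
  case 0
  show ?case unfolding Good_def by simp
next
  case (Suc n)
  have "Good \<alpha> (\<lambda>t. (\<Sum>i<n. f i t) + f n t) ((\<Sum>i<n. L i) + L n)" using Suc by (intro good_add) auto
  then show ?case by simp
qed

lemma restrict_int:
  fixes f :: "real \<Rightarrow> real"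
  assumes "(f has_integral I) {0..<1}"
  shows "((\<lambda>x. if x \<in> {0..<1} then f x else 0) has_integral I) (cbox 0 (1::real))"
proof -
  have sub: "{0..<1::real} \<subseteq> {0..1}" by auto
  show ?thesis using assms has_integral_restrict[OF sub, where f=f] by simp
qed

lemma sandwich:
  fixes h :: "real \<Rightarrow> real"
  assumes irr: "\<alpha> \<notin> \<rat>"
    and sw: "\<And>\<epsilon>. \<epsilon> > 0 \<Longrightarrow> \<exists>s S. St s \<and> St S \<and> (\<forall>t\<in>{0..<1}. s t \<le> h t \<and> h t \<le> S t) \<and>
               (\<forall>Ls LS. Good \<alpha> s Ls \<longrightarrow> Good \<alpha> S LS \<longrightarrow> LS - Ls < \<epsilon>)"
  shows "(h has_integral (integral {0..<1} h)) {0..<1} \<and> Good \<alpha> h (integral {0..<1} h)"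
proof -
  have sw2: "\<exists>s S Ls LS. Good \<alpha> s Ls \<and> Good \<alpha> S LS \<and> (s has_integral Ls) {0..<1} \<and> (S has_integral LS) {0..<1}
     \<and> (\<forall>t\<in>{0..<1}. s t \<le> h t \<and> h t \<le> S t) \<and> LS - Ls < \<epsilon>" if eps: "\<epsilon> > 0" for \<epsilon>
  proof -
    obtain s S where sS: "St s" "St S" "\<forall>t\<in>{0..<1}. s t \<le> h t \<and> h t \<le> S t"
      "\<forall>Ls LS. Good \<alpha> s Ls \<longrightarrow> Good \<alpha> S LS \<longrightarrow> LS - Ls < \<epsilon>" using sw[OF eps] by blast
    obtain Ls where "Good \<alpha> s Ls" "(s has_integral Ls) {0..<1}" using St_good[OF irr sS(1)] by blast
    moreover obtain LS where "Good \<alpha> S LS" "(S has_integral LS) {0..<1}" using St_good[OF irr sS(2)] by blast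
    ultimately show ?thesis using sS by blast
  qed
  define hr where "hr x = (if x \<in> {0..<1} then h x else 0)" for x :: real
  have "hr integrable_on cbox 0 1"
  proof (rule integrable_straddle_interval)
    fix e :: real assume "e > 0"
    then obtain s S Ls LS where *: "(s has_integral Ls) {0..<1}" "(S has_integral LS) {0..<1}"
      "\<forall>t\<in>{0..<1}. s t \<le> h t \<and> h t \<le> S t" "LS - Ls < e"
      using sw2 by blast
    have "\<forall>x\<in>cbox 0 1. (if x \<in> {0..<1} then s x else 0) \<le> hr x \<and> hr x \<le> (if x \<in> {0..<1} then S x else 0)"
      using *(3) by (auto simp: hr_def)
    moreover have "\<bar>Ls - LS\<bar> < e" using *(4) has_integral_le[OF *(1,2)] *(3) by force
    ultimately show "\<exists>g h i j. (g has_integral i) (cbox 0 1) \<and> (h has_integral j) (cbox 0 1) \<and>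
         \<bar>i - j\<bar> < e \<and> (\<forall>x\<in>cbox 0 1. g x \<le> hr x \<and> hr x \<le> h x)"
      using restrict_int[OF *(1)] restrict_int[OF *(2)] by blast
  qed
  then obtain I where "(hr has_integral I) (cbox 0 1)" by blast
  then have hI: "(h has_integral I) {0..<1}"
  proof -
    have sub: "{0..<1::real} \<subseteq> {0..1}" by auto
    show ?thesis using \<open>(hr has_integral I) (cbox 0 1)\<close> has_integral_restrict[OF sub, where f=h] unfolding hr_def by simp
  qed
  then have II: "integral {0..<1} h = I" by (rule integral_unique)
  have good: "Good \<alpha> h I"
    unfolding Good_def
  proof
    fix y
    let ?A = "\<lambda>f N. (\<Sum>k<N. f (frac (y + real k * \<alpha>))) / real N"
    show "?A h \<longlonglongrightarrow> I"
    proof (rule order_tendstoI)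
      fix a assume "a < I"
      then obtain s S Ls LS where *: "Good \<alpha> s Ls" "(s has_integral Ls) {0..<1}" "(S has_integral LS) {0..<1}"
        "\<forall>t\<in>{0..<1}. s t \<le> h t \<and> h t \<le> S t" "LS - Ls < I - a"
        using sw2[of "I - a"] by auto
      have "I \<le> LS" using has_integral_le[OF hI *(3)] *(4) by force
      then have "a < Ls" using *(5) by linarith
      then have ev: "eventually (\<lambda>N. a < ?A s N) sequentially"
        using *(1) unfolding Good_def by (intro order_tendstoD(1)) auto
      have le: "s (frac x) \<le> h (frac x)" for x using *(4) frac_lt_1[of x] frac_ge_0[of x] by auto
      have leA: "?A s N \<le> ?A h N" for N
        using le by (intro divide_right_mono sum_mono) auto
      show "eventually (\<lambda>N. a < ?A h N) sequentially"
        using ev by (rule eventually_mono) (rule less_le_trans[OF _ leA])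
    next
      fix a assume "I < a"
      then obtain s S Ls LS where *: "Good \<alpha> S LS" "(s has_integral Ls) {0..<1}" "(S has_integral LS) {0..<1}"
        "\<forall>t\<in>{0..<1}. s t \<le> h t \<and> h t \<le> S t" "LS - Ls < a - I"
        using sw2[of "a - I"] by auto
      have "Ls \<le> I" using has_integral_le[OF *(2) hI] *(4) by force
      then have "LS < a" using *(5) by linarith
      then have ev2: "eventually (\<lambda>N. ?A S N < a) sequentially"
        using *(1) unfolding Good_def by (intro order_tendstoD(2)) auto
      have le: "h (frac x) \<le> S (frac x)" for x using *(4) frac_lt_1[of x] frac_ge_0[of x] by auto
      have leB: "?A h N \<le> ?A S N" for N
        using le by (intro divide_right_mono sum_mono) auto
      show "eventually (\<lambda>N. ?A h N < a) sequentially"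
        using ev2 by (rule eventually_mono) (rule le_less_trans[OF leB])
    qed
  qed
  show ?thesis using hI good II by simp
qed



locale part =
  fixes p :: "nat \<Rightarrow> real" and n :: nat
  assumes p0: "p 0 = 0" and pn: "p n = 1" and inc: "\<forall>i<n. p i < p (Suc i)"
begin

lemma mono: "i \<le> j \<Longrightarrow> j \<le> n \<Longrightarrow> p i \<le> p j"
proof (induction j)
  case 0 then show ?case by simp
next
  case (Suc j)
  show ?case
  proof (cases "i = Suc j")
    case True then show ?thesis by simp
  next
    case False
    then have "i \<le> j" "j < n" using Suc.prems by auto
    then show ?thesis using Suc.IH inc by force
  qed
qed

lemma range: "i \<le> n \<Longrightarrow> 0 \<le> p i \<and> p i \<le> 1"
  using mono[of 0 i] mono[of i n] p0 pn by auto

lemma cell_ex_gen: "m \<le> n \<Longrightarrow> p 0 \<le> t \<Longrightarrow> t < p m \<Longrightarrow> \<exists>i<m. p i \<le> t \<and> t < p (Suc i)"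
proof (induction m)
  case 0 then show ?case by simp
next
  case (Suc m)
  show ?case
  proof (cases "t < p m")
    case True then show ?thesis using Suc by (metis less_SucI Suc_leD)
  next
    case False then show ?thesis using Suc.prems by (intro exI[of _ m]) auto
  qed
qed

lemma cell_ex: "t \<in> {0..<1} \<Longrightarrow> \<exists>i<n. p i \<le> t \<and> t < p (Suc i)"
  using cell_ex_gen[of n t] p0 pn by auto

lemma cell_sum:
  assumes "i < n" "p i \<le> t" "t < p (Suc i)"
  shows "(\<Sum>j<n. c j * ind (p j) (p (Suc j)) t) = c i"
proof -
  have z: "ind (p j) (p (Suc j)) t = 0" if "j < n" "j \<noteq> i" for j
  proof (cases "j < i")
    case True
    then have "p (Suc j) \<le> p i" using mono assms(1) by auto
    then show ?thesis using assms by (auto simp: ind_def)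
  next
    case False
    then have "Suc i \<le> j" using that by auto
    then have "p (Suc i) \<le> p j" using mono that by auto
    then show ?thesis using assms by (auto simp: ind_def)
  qed
  have "(\<Sum>j<n. c j * ind (p j) (p (Suc j)) t) = c i * ind (p i) (p (Suc i)) t + (\<Sum>j\<in>{..<n} - {i}. c j * ind (p j) (p (Suc j)) t)"
    using assms(1) by (subst sum.remove[of _ i]) auto
  also have "(\<Sum>j\<in>{..<n} - {i}. c j * ind (p j) (p (Suc j)) t) = 0"
    using z by (intro sum.neutral) auto
  finally show ?thesis using assms by (simp add: ind_def)
qed

lemma St_step: "St (\<lambda>t. \<Sum>j<n. c j * ind (p j) (p (Suc j)) t)"
proof (rule St_sum)
  fix j assume "j < n"
  then have "0 \<le> p j" "p j \<le> p (Suc j)" "p (Suc j) \<le> 1" using range[of j] range[of "Suc j"] inc by auto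
  then show "St (\<lambda>t. c j * ind (p j) (p (Suc j)) t)" by (intro St_cmul St_ind)
qed

lemma good_step:
  assumes "\<alpha> \<notin> \<rat>"
  shows "Good \<alpha> (\<lambda>t. \<Sum>j<n. c j * ind (p j) (p (Suc j)) t) (\<Sum>j<n. c j * (p (Suc j) - p j))"
proof (rule good_sum)
  fix j assume "j < n"
  then have "0 \<le> p j" "p j \<le> p (Suc j)" "p (Suc j) \<le> 1" using range[of j] range[of "Suc j"] inc by auto
  then show "Good \<alpha> (\<lambda>t. c j * ind (p j) (p (Suc j)) t) (c j * (p (Suc j) - p j))"
    by (intro good_cmul good_ind assms)
qed

end



lemma good_diff: "Good \<alpha> f L1 \<Longrightarrow> Good \<alpha> g L2 \<Longrightarrow> Good \<alpha> (\<lambda>t. f t - g t) (L1 - L2)"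
proof -
  assume "Good \<alpha> f L1" "Good \<alpha> g L2"
  then have "Good \<alpha> (\<lambda>t. f t + (-1) * g t) (L1 + (-1) * L2)" by (intro good_add good_cmul)
  then show ?thesis by simp
qed

lemma prod_bound:
  fixes a b c d B :: real
  assumes "0 \<le> c" "c \<le> a" "a \<le> B" "0 \<le> d" "d \<le> b" "b \<le> B"
  shows "a * b - c * d \<le> B * (a - c) + B * (b - d)"
proof -
  have "a * b - c * d = a * (b - d) + d * (a - c)" by (simp add: algebra_simps)
  moreover have "a * (b - d) \<le> B * (b - d)" using assms by (intro mult_right_mono) auto
  moreover have "d * (a - c) \<le> B * (a - c)" using assms by (intro mult_right_mono) auto
  ultimately show ?thesis by linarith
qed

lemma g_good:
  fixes f :: "real \<Rightarrow> real" and \<beta> :: real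
  assumes irr: "\<alpha> \<notin> \<rat>" and nn: "\<forall>x\<in>{0..<1}. f x \<ge> 0" and ri: "riemann_integrable_01 f"
  shows "((\<lambda>t. f (frac (t + \<beta>)) * f t) has_integral integral {0..<1} (\<lambda>t. f (frac (t + \<beta>)) * f t)) {0..<1}
     \<and> Good \<alpha> (\<lambda>t. f (frac (t + \<beta>)) * f t) (integral {0..<1} (\<lambda>t. f (frac (t + \<beta>)) * f t))"
proof (rule sandwich[OF irr])
  have bd: "bounded (f ` {0..<1})" using ri unfolding riemann_integrable_01_def by blast
  then obtain B where B: "\<forall>x\<in>{0..<1}. \<bar>f x\<bar> \<le> B" unfolding bounded_real by auto
  have B0: "0 \<le> B" using B by (metis abs_ge_zero atLeastLessThan_iff order_trans zero_less_one order.refl)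
  have bda: "bdd_above (f ` A)" and bdb: "bdd_below (f ` A)" if "A \<subseteq> {0..<1}" for A
    using bounded_imp_bdd_above[OF bd] bounded_imp_bdd_below[OF bd] that
    by (meson bdd_above_mono bdd_below_mono image_mono)+
  fix \<epsilon> :: real assume "\<epsilon> > 0"
  define \<epsilon>' where "\<epsilon>' = \<epsilon> / (2 * B + 1)"
  have "\<epsilon>' > 0" using \<open>\<epsilon> > 0\<close> B0 by (simp add: \<epsilon>'_def)
  then obtain n p where p0: "p 0 = 0" and pn: "p n = 1" and inc: "\<forall>i<n. p i < p (Suc i)"
    and small: "(\<Sum>i<n. (p (Suc i) - p i) *
            ((SUP x\<in>{p i..<p (Suc i)}. f x) - (INF x\<in>{p i..<p (Suc i)}. f x))) < \<epsilon>'"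
    using ri unfolding riemann_integrable_01_def by blast
  interpret part p n using p0 pn inc by unfold_locales
  define m where "m i = (INF x\<in>{p i..<p (Suc i)}. f x)" for i
  define M where "M i = (SUP x\<in>{p i..<p (Suc i)}. f x)" for i
  define l where "l t = (\<Sum>j<n. m j * ind (p j) (p (Suc j)) t)" for t
  define u where "u t = (\<Sum>j<n. M j * ind (p j) (p (Suc j)) t)" for t
  have cellsub: "{p j..<p (Suc j)} \<subseteq> {0..<1}" "{p j..<p (Suc j)} \<noteq> {}" if "j < n" for j
    using range[of j] range[of "Suc j"] inc that by auto
  have lu: "0 \<le> l t \<and> l t \<le> f t \<and> f t \<le> u t \<and> u t \<le> B" if t: "t \<in> {0..<1}" for t
  proof -
    obtain i where i: "i < n" "p i \<le> t" "t < p (Suc i)" using cell_ex[OF t] by blast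
    have lt: "l t = m i" unfolding l_def by (rule cell_sum[OF i])
    have ut: "u t = M i" unfolding u_def by (rule cell_sum[OF i])
    have tin: "t \<in> {p i..<p (Suc i)}" using i by auto
    have "m i \<le> f t" unfolding m_def by (rule cINF_lower[OF bdb[OF cellsub(1)[OF i(1)]] tin])
    moreover have "f t \<le> M i" unfolding M_def by (rule cSUP_upper[OF tin bda[OF cellsub(1)[OF i(1)]]])
    moreover have "0 \<le> m i" unfolding m_def
      using cellsub[OF i(1)] nn by (intro cINF_greatest) auto
    moreover have "M i \<le> B" unfolding M_def
      using cellsub[OF i(1)] B by (intro cSUP_least) (auto simp: abs_le_iff)
    ultimately show ?thesis using lt ut by simp
  qed
  have Stl: "St l" unfolding l_def by (rule St_step)
  have Stu: "St u" unfolding u_def by (rule St_step)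
  define s where "s t = l (frac (t + \<beta>)) * l t" for t
  define S where "S t = u (frac (t + \<beta>)) * u t" for t
  have Sts: "St s" unfolding s_def by (intro St_mult St_rot Stl)
  have StS: "St S" unfolding S_def by (intro St_mult St_rot Stu)
  have fr: "frac (t + \<beta>) \<in> {0..<1}" for t by (simp add: frac_lt_1)
  have sand: "\<forall>t\<in>{0..<1}. s t \<le> f (frac (t + \<beta>)) * f t \<and> f (frac (t + \<beta>)) * f t \<le> S t"
  proof
    fix t :: real assume t: "t \<in> {0..<1}"
    note a = lu[OF t] lu[OF fr[of t]]
    show "s t \<le> f (frac (t + \<beta>)) * f t \<and> f (frac (t + \<beta>)) * f t \<le> S t"
      unfolding s_def S_def using a by (auto intro!: mult_mono)
  qed
  define W where "W = (\<Sum>j<n. (M j - m j) * (p (Suc j) - p j))"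
  have W: "W < \<epsilon>'" using small unfolding W_def m_def M_def by (simp add: mult.commute)
  have Gw: "Good \<alpha> (\<lambda>t. u t - l t) W"
  proof -
    have "Good \<alpha> (\<lambda>t. \<Sum>j<n. (M j - m j) * ind (p j) (p (Suc j)) t) W"
      unfolding W_def by (rule good_step[OF irr])
    moreover have "(\<lambda>t. \<Sum>j<n. (M j - m j) * ind (p j) (p (Suc j)) t) = (\<lambda>t. u t - l t)"
      unfolding u_def l_def by (simp add: sum_subtractf left_diff_distrib)
    ultimately show ?thesis by simp
  qed
  show "\<exists>s S. St s \<and> St S \<and> (\<forall>t\<in>{0..<1}. s t \<le> f (frac (t + \<beta>)) * f t \<and> f (frac (t + \<beta>)) * f t \<le> S t) \<and>
               (\<forall>Ls LS. Good \<alpha> s Ls \<longrightarrow> Good \<alpha> S LS \<longrightarrow> LS - Ls < \<epsilon>)"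
  proof (intro exI conjI allI impI)
    show "St s" by (fact Sts)
    show "St S" by (fact StS)
    show "\<forall>t\<in>{0..<1}. s t \<le> f (frac (t + \<beta>)) * f t \<and> f (frac (t + \<beta>)) * f t \<le> S t" by (fact sand)
    fix Ls LS assume gs: "Good \<alpha> s Ls" and gS: "Good \<alpha> S LS"
    have g1: "Good \<alpha> (\<lambda>t. S t - s t) (LS - Ls)" by (rule good_diff[OF gS gs])
    have g2: "Good \<alpha> (\<lambda>t. B * (u (frac (t + \<beta>)) - l (frac (t + \<beta>))) + B * (u t - l t)) (B * W + B * W)"
      using Gw by (intro good_add good_cmul good_rot[where f="\<lambda>t. u t - l t"])
    have "\<forall>t\<in>{0..<1}. S t - s t \<le> B * (u (frac (t + \<beta>)) - l (frac (t + \<beta>))) + B * (u t - l t)"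
    proof
      fix t :: real assume t: "t \<in> {0..<1}"
      note a = lu[OF t] lu[OF fr[of t]]
      show "S t - s t \<le> B * (u (frac (t + \<beta>)) - l (frac (t + \<beta>))) + B * (u t - l t)"
        unfolding s_def S_def using a by (intro prod_bound) auto
    qed
    then have "LS - Ls \<le> B * W + B * W" by (rule good_mono[OF g1 g2])
    also have "\<dots> \<le> 2 * B * \<epsilon>'" using W B0 by (simp add: mult_left_mono)
    also have "\<dots> < \<epsilon>"
    proof -
      have "2 * B * \<epsilon>' = \<epsilon> * (2 * B) / (2 * B + 1)" using B0 by (simp add: \<epsilon>'_def)
      also have "\<dots> < \<epsilon>" using B0 \<open>\<epsilon> > 0\<close> by (simp add: field_simps)
      finally show ?thesis .
    qed
    finally show "LS - Ls < \<epsilon>" .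
  qed
qed



lemma sym_sum:
  fixes G :: "int \<Rightarrow> real"
  shows "(\<Sum>x\<in>{-int n..int n}. G x) + G 0 = (\<Sum>k<Suc n. G (int k)) + (\<Sum>k<Suc n. G (- int k))"
proof (induction n)
  case 0 then show ?case by simp
next
  case (Suc n)
  have e: "{-int (Suc n)..int (Suc n)} = insert (- int (Suc n)) (insert (int (Suc n)) {-int n..int n})" by auto
  have "(\<Sum>x\<in>{-int (Suc n)..int (Suc n)}. G x) = G (- int (Suc n)) + (G (int (Suc n)) + (\<Sum>x\<in>{-int n..int n}. G x))"
    unfolding e by (subst sum.insert; simp)+
  then show ?case using Suc by simp
qed

lemma count_bad: "card {x\<in>{-int n..int n}. \<not> \<bar>x - z\<bar> \<le> int n} \<le> 2 * nat \<bar>z\<bar>"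
proof -
  have "{x\<in>{-int n..int n}. \<not> \<bar>x - z\<bar> \<le> int n} \<subseteq> {int n - \<bar>z\<bar><..int n} \<union> {-int n..<\<bar>z\<bar> - int n}"
    by auto
  then have "card {x\<in>{-int n..int n}. \<not> \<bar>x - z\<bar> \<le> int n} \<le> card ({int n - \<bar>z\<bar><..int n} \<union> {-int n..<\<bar>z\<bar> - int n})"
    by (intro card_mono) auto
  also have "\<dots> \<le> card {int n - \<bar>z\<bar><..int n} + card {-int n..<\<bar>z\<bar> - int n}" by (rule card_Un_le)
  also have "\<dots> = 2 * nat \<bar>z\<bar>" by simp
  finally show ?thesis .
qed


lemma frac_Tz:
  "frac (frac (y + of_int x * \<alpha>) + of_int (- z) * \<alpha>) = frac (y + of_int (x - z) * \<alpha>)"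
proof -
  have "frac (frac (y + of_int x * \<alpha>) + of_int (- z) * \<alpha>) = frac (y + of_int x * \<alpha> + of_int (- z) * \<alpha>)"
    by (rule frac_frac_add)
  also have "y + of_int x * \<alpha> + of_int (- z) * \<alpha> = y + of_int (x - z) * \<alpha>" by (simp add: algebra_simps)
  finally show ?thesis .
qed

lemma cancel_aux: "a \<noteq> 0 \<Longrightarrow> x / a * (a / c) = x / (c::real)"
  by (cases "c = 0") (simp_all add: field_simps)

theorem mainTheorem5:
  fixes \<alpha> :: real and f :: "real \<Rightarrow> real" and y :: real
  assumes "\<alpha> > 0" and "\<alpha> \<notin> \<rat>"
    and "\<forall>x\<in>{0..<1}. f x \<ge> 0"
    and "riemann_integrable_01 f"
    and "y \<in> {0..<1}"
  shows "is_autocorrelation (\<lambda>z. complex_of_real (f (T_pow \<alpha> z y)))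
           (\<lambda>z. complex_of_real (integral {0..<1} (\<lambda>x. f (T_pow \<alpha> (- z) x) * f x)))"
  unfolding is_autocorrelation_def
proof (intro allI)
  fix z :: int
  define \<mu> where "\<mu> = (\<lambda>z. complex_of_real (f (T_pow \<alpha> z y)))"
  define \<beta> where "\<beta> = of_int (- z) * \<alpha>"
  define g where "g t = f (frac (t + \<beta>)) * f t" for t
  have intg: "(\<lambda>x. f (T_pow \<alpha> (- z) x) * f x) = g" by (auto simp: T_pow_def g_def \<beta>_def fun_eq_iff)
  define L where "L = integral {0..<1} g"
  have irr2: "- \<alpha> \<notin> \<rat>" using assms(2) by simp
  have G1: "Good \<alpha> g L" using g_good[OF assms(2) assms(3) assms(4), of \<beta>] unfolding g_def L_def by blast
  have G2: "Good (- \<alpha>) g L" using g_good[OF irr2 assms(3) assms(4), of \<beta>] unfolding g_def L_def by blast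
  have bd: "bounded (f ` {0..<1})" using assms(4) unfolding riemann_integrable_01_def by blast
  then obtain B where B: "\<forall>x\<in>{0..<1}. \<bar>f x\<bar> \<le> B" unfolding bounded_real by auto
  define G where "G x = g (frac (y + of_int x * \<alpha>))" for x :: int
  have fr: "frac t \<in> {0..<1}" for t by (simp add: frac_lt_1)
  have Bf: "\<bar>f (frac t)\<bar> \<le> B" for t using B fr[of t] by blast
  have Gb: "\<bar>G x\<bar> \<le> B * B" for x
  proof -
    have "\<bar>G x\<bar> = \<bar>f (frac (frac (y + of_int x * \<alpha>) + \<beta>))\<bar> * \<bar>f (frac (y + of_int x * \<alpha>))\<bar>"
      by (simp add: G_def g_def abs_mult)
    also have "\<dots> \<le> B * B" using Bf Bf[of 0] by (intro mult_mono) (auto intro: order_trans[OF abs_ge_zero])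
    finally show ?thesis .
  qed
  define T where "T n = {-int n..int n}" for n
  have conv: "zconv (restr n \<mu>) (reflect (restr n \<mu>)) z
      = complex_of_real (\<Sum>x\<in>T n. if \<bar>x - z\<bar> \<le> int n then G x else 0)" for n
  proof -
    have sub: "{x. restr n \<mu> x \<noteq> 0} \<subseteq> T n" by (auto simp: restr_def T_def)
    have "zconv (restr n \<mu>) (reflect (restr n \<mu>)) z = (\<Sum>x\<in>{x. restr n \<mu> x \<noteq> 0}. restr n \<mu> x * reflect (restr n \<mu>) (z - x))"
      by (simp add: zconv_def)
    also have "\<dots> = (\<Sum>x\<in>T n. restr n \<mu> x * reflect (restr n \<mu>) (z - x))"
      by (rule sum.mono_neutral_left) (use sub in \<open>auto simp: T_def\<close>)
    also have "\<dots> = (\<Sum>x\<in>T n. complex_of_real (if \<bar>x - z\<bar> \<le> int n then G x else 0))"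
    proof (rule sum.cong)
      fix x assume x: "x \<in> T n"
      have mx: "restr n \<mu> x = complex_of_real (f (T_pow \<alpha> x y))" using x by (auto simp: restr_def T_def \<mu>_def)
      have rf: "reflect (restr n \<mu>) (z - x) = (if \<bar>x - z\<bar> \<le> int n then complex_of_real (f (T_pow \<alpha> (x - z) y)) else 0)"
        by (simp add: reflect_def restr_def \<mu>_def abs_minus_commute)
      have Gx: "G x = f (T_pow \<alpha> (x - z) y) * f (T_pow \<alpha> x y)"
        unfolding G_def g_def \<beta>_def T_pow_def frac_Tz by (simp add: algebra_simps)
      show "restr n \<mu> x * reflect (restr n \<mu>) (z - x) = complex_of_real (if \<bar>x - z\<bar> \<le> int n then G x else 0)"
        unfolding mx rf Gx by (simp add: mult.commute)
    qed simp
    also have "\<dots> = complex_of_real (\<Sum>x\<in>T n. if \<bar>x - z\<bar> \<le> int n then G x else 0)"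
      by (simp add: of_real_sum)
    finally show ?thesis .
  qed
  define a where "a n = (\<Sum>x\<in>T n. if \<bar>x - z\<bar> \<le> int n then G x else 0) / real (2*n+1)" for n
  define b where "b n = (\<Sum>x\<in>T n. G x) / real (2*n+1)" for n
  define P where "P N = (\<Sum>k<N. g (frac (y + real k * \<alpha>)))" for N
  define Q where "Q N = (\<Sum>k<N. g (frac (y + real k * (- \<alpha>))))" for N
  have PQ: "(\<Sum>x\<in>T n. G x) + G 0 = P (Suc n) + Q (Suc n)" for n
  proof -
    have "(\<Sum>k<Suc n. G (int k)) = P (Suc n)" unfolding P_def G_def by simp
    moreover have "(\<Sum>k<Suc n. G (- int k)) = Q (Suc n)" unfolding Q_def G_def by (simp add: algebra_simps)
    ultimately show ?thesis using sym_sum[of G n] unfolding T_def by simp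
  qed
  have P: "(\<lambda>n. P (Suc n) / real (Suc n)) \<longlonglongrightarrow> L"
    using G1 unfolding Good_def P_def by (intro LIMSEQ_Suc[where f="\<lambda>N. P N / real N", unfolded P_def]) blast
  have Q: "(\<lambda>n. Q (Suc n) / real (Suc n)) \<longlonglongrightarrow> L"
    using G2 unfolding Good_def Q_def by (intro LIMSEQ_Suc[where f="\<lambda>N. Q N / real N", unfolded Q_def]) blast
  have r: "(\<lambda>n. real (Suc n) / real (2*n+1)) \<longlonglongrightarrow> 1/2" by real_asymp
  have c0: "(\<lambda>n. G 0 / real (2*n+1)) \<longlonglongrightarrow> 0" by real_asymp
  have beq: "b n = P (Suc n) / real (Suc n) * (real (Suc n) / real (2*n+1)) + Q (Suc n) / real (Suc n) * (real (Suc n) / real (2*n+1)) - G 0 / real (2*n+1)" for n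
  proof -
    have "b n = (P (Suc n) + Q (Suc n) - G 0) / real (2*n+1)" unfolding b_def using PQ[of n] by (simp add: algebra_simps)
    also have "\<dots> = P (Suc n) / real (2*n+1) + Q (Suc n) / real (2*n+1) - G 0 / real (2*n+1)"
      by (simp add: add_divide_distrib diff_divide_distrib)
    also have "\<dots> = P (Suc n) / real (Suc n) * (real (Suc n) / real (2*n+1)) + Q (Suc n) / real (Suc n) * (real (Suc n) / real (2*n+1)) - G 0 / real (2*n+1)"
      using cancel_aux[of "real (Suc n)"] by simp
    finally show ?thesis .
  qed
  have "b \<longlonglongrightarrow> L * (1/2) + L * (1/2) - 0"
    unfolding beq by (intro tendsto_diff tendsto_add tendsto_mult P Q r c0)
  then have bL: "b \<longlonglongrightarrow> L" by simp
  have ab: "(\<lambda>n. a n - b n) \<longlonglongrightarrow> 0"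
  proof (rule Lim_null_comparison)
    show "(\<lambda>n. real (2 * nat \<bar>z\<bar>) * (B * B) / real (2*n+1)) \<longlonglongrightarrow> 0" by real_asymp
    show "\<forall>\<^sub>F n in sequentially. norm (a n - b n) \<le> real (2 * nat \<bar>z\<bar>) * (B * B) / real (2*n+1)"
    proof (intro always_eventually allI)
      fix n
      define E where "E = {x\<in>T n. \<not> \<bar>x - z\<bar> \<le> int n}"
      have fin: "finite (T n)" by (simp add: T_def)
      have "(\<Sum>x\<in>T n. if \<bar>x - z\<bar> \<le> int n then G x else 0) - (\<Sum>x\<in>T n. G x) = (\<Sum>x\<in>T n. (if \<bar>x - z\<bar> \<le> int n then G x else 0) - G x)"
        by (simp add: sum_subtractf)
      also have "\<dots> = (\<Sum>x\<in>T n. - (if \<not> \<bar>x - z\<bar> \<le> int n then G x else 0))"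
        by (rule sum.cong) auto
      also have "\<dots> = - (\<Sum>x\<in>T n. if \<not> \<bar>x - z\<bar> \<le> int n then G x else 0)"
        by (simp add: sum_negf)
      also have "(\<Sum>x\<in>T n. if \<not> \<bar>x - z\<bar> \<le> int n then G x else 0) = (\<Sum>x\<in>E. G x)"
        unfolding E_def using fin by (simp add: sum.inter_filter)
      finally have d0: "(\<Sum>x\<in>T n. if \<bar>x - z\<bar> \<le> int n then G x else 0) - (\<Sum>x\<in>T n. G x) = - (\<Sum>x\<in>E. G x)" .
      have d: "a n - b n = - (\<Sum>x\<in>E. G x) / real (2*n+1)"
        unfolding a_def b_def by (simp only: diff_divide_distrib[symmetric] d0)
      have "\<bar>\<Sum>x\<in>E. G x\<bar> \<le> (\<Sum>x\<in>E. \<bar>G x\<bar>)" by (rule sum_abs)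
      also have "\<dots> \<le> real (card E) * (B * B)" using Gb by (intro sum_bounded_above) auto
      also have "\<dots> \<le> real (2 * nat \<bar>z\<bar>) * (B * B)"
        using count_bad[of n z] Gb[of 0] unfolding E_def T_def
        by (intro mult_right_mono) auto
      finally have "\<bar>\<Sum>x\<in>E. G x\<bar> \<le> real (2 * nat \<bar>z\<bar>) * (B * B)" .
      then show "norm (a n - b n) \<le> real (2 * nat \<bar>z\<bar>) * (B * B) / real (2*n+1)"
        unfolding d by (simp add: abs_minus_commute divide_right_mono)
    qed
  qed
  have aL: "a \<longlonglongrightarrow> L"
  proof -
    have "(\<lambda>n. (a n - b n) + b n) \<longlonglongrightarrow> 0 + L" by (intro tendsto_add ab bL)
    then show ?thesis by simp
  qed
  have eq: "zconv (restr n (\<lambda>z. complex_of_real (f (T_pow \<alpha> z y)))) (reflect (restr n (\<lambda>z. complex_of_real (f (T_pow \<alpha> z y))))) z / of_nat (2 * n + 1)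
     = complex_of_real (a n)" for n
    using conv[of n] unfolding \<mu>_def a_def by (simp add: of_real_divide)
  show "(\<lambda>n. zconv (restr n (\<lambda>z. complex_of_real (f (T_pow \<alpha> z y)))) (reflect (restr n (\<lambda>z. complex_of_real (f (T_pow \<alpha> z y))))) z / of_nat (2 * n + 1))
     \<longlonglongrightarrow> complex_of_real (integral {0..<1} (\<lambda>x. f (T_pow \<alpha> (- z) x) * f x))"
    unfolding eq intg L_def[symmetric] by (intro tendsto_of_real aL)
qed

end
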